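(* For every left-c.e. metric space $\mathcal{M}=(M,d,(p_k)_{k\in\mathbb{N}})$ there exists a left-c.e. ultrametric space $\mathcal{A}$ that has no computable isometric embedding into $\mathcal{M}$. In particular, there is no left-c.e. metric space universal for all left-c.e. metric spaces (without a bound on the diameter) under computable isometric embeddings.
   Context: $\mathcal{M}=(M,d,(p_k))$ is a left-c.e. metric space if it is a Polish metric space with dense sequence of special points $(p_k)$ and $d(p_i,p_k)$ is a left-c.e. real uniformly in $i,k$. An ultrametric space is one satisfying $d(x,z)\le\max(d(x,y),d(y,z))$. A Cauchy name in $\mathcal{M}$ is $g:\mathbb{N}\to\mathbb{N}$ with $d(p_{g(i)},p_{g(k)})\le 2^{-i}$ for $i\le k$. An isometric embedding $f$ of $(A,d_A,(q_k))$ into $\mathcal{M}$ is computable if uniformly in $k$ one can compute a Cauchy name for $f(q_k)$. *)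

theory Defs
  imports "HOL-Analysis.Analysis" "HOL-Library.Nat_Bijection"
begin

datatype recf =
    RZ
  | RS
  | RProj nat
  | RComp recf "recf list"
  | RPrim recf recf
  | RMn recf

inductive rec_eval :: "recf \<Rightarrow> nat list \<Rightarrow> nat \<Rightarrow> bool" where
  zero: "rec_eval RZ xs 0"
| succ: "rec_eval RS (x # xs) (Suc x)"
| proj: "i < length xs \<Longrightarrow> rec_eval (RProj i) xs (xs ! i)"
| comp: "list_all2 (\<lambda>g y. rec_eval g xs y) gs ys \<Longrightarrow> rec_eval f ys z
           \<Longrightarrow> rec_eval (RComp f gs) xs z"
| prim0: "rec_eval f xs y \<Longrightarrow> rec_eval (RPrim f g) (0 # xs) y"
| primS: "rec_eval (RPrim f g) (n # xs) y \<Longrightarrow> rec_eval g (y # n # xs) z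
           \<Longrightarrow> rec_eval (RPrim f g) (Suc n # xs) z"
| mn: "rec_eval f (n # xs) 0 \<Longrightarrow> (\<forall>m<n. \<exists>y. rec_eval f (m # xs) (Suc y))
           \<Longrightarrow> rec_eval (RMn f) xs n"

definition computable1 :: "(nat \<Rightarrow> nat) \<Rightarrow> bool" where
  "computable1 f \<longleftrightarrow> (\<exists>c. \<forall>x. rec_eval c [x] (f x))"

definition computable2 :: "(nat \<Rightarrow> nat \<Rightarrow> nat) \<Rightarrow> bool" where
  "computable2 f \<longleftrightarrow> (\<exists>c. \<forall>x y. rec_eval c [x, y] (f x y))"

definition computable3 :: "(nat \<Rightarrow> nat \<Rightarrow> nat \<Rightarrow> nat) \<Rightarrow> bool" where
  "computable3 f \<longleftrightarrow> (\<exists>c. \<forall>x y z. rec_eval c [x, y, z] (f x y z))"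

definition rat_of_code :: "nat \<Rightarrow> real" where
  "rat_of_code n = (case prod_decode n of (a, b) \<Rightarrow> real_of_int (int_decode a) / real (Suc b))"

definition left_ce_dists :: "('a \<Rightarrow> 'a \<Rightarrow> real) \<Rightarrow> (nat \<Rightarrow> 'a) \<Rightarrow> bool" where
  "left_ce_dists d p \<longleftrightarrow>
     (\<exists>F. computable3 F \<and>
        (\<forall>i k. mono (\<lambda>s. rat_of_code (F i k s)) \<and>
               (\<lambda>s. rat_of_code (F i k s)) \<longlonglongrightarrow> d (p i) (p k)))"

definition left_ce_metric_space :: "'a set \<Rightarrow> ('a \<Rightarrow> 'a \<Rightarrow> real) \<Rightarrow> (nat \<Rightarrow> 'a) \<Rightarrow> bool" where
  "left_ce_metric_space M d p \<longleftrightarrow>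
     Metric_space M d \<and> Metric_space.mcomplete M d \<and>
     range p \<subseteq> M \<and> Metric_space.mtopology M d closure_of (range p) = M \<and>
     left_ce_dists d p"

definition ultrametric :: "'a set \<Rightarrow> ('a \<Rightarrow> 'a \<Rightarrow> real) \<Rightarrow> bool" where
  "ultrametric M d \<longleftrightarrow> (\<forall>x\<in>M. \<forall>y\<in>M. \<forall>z\<in>M. d x z \<le> max (d x y) (d y z))"

definition cauchy_name :: "('a \<Rightarrow> 'a \<Rightarrow> real) \<Rightarrow> (nat \<Rightarrow> 'a) \<Rightarrow> (nat \<Rightarrow> nat) \<Rightarrow> bool" where
  "cauchy_name d p g \<longleftrightarrow> (\<forall>i k. i \<le> k \<longrightarrow> d (p (g i)) (p (g k)) \<le> (1/2) ^ i)"

definition cauchy_name_for :: "('a \<Rightarrow> 'a \<Rightarrow> real) \<Rightarrow> (nat \<Rightarrow> 'a) \<Rightarrow> (nat \<Rightarrow> nat) \<Rightarrow> 'a \<Rightarrow> bool" where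
  "cauchy_name_for d p g x \<longleftrightarrow> cauchy_name d p g \<and> (\<lambda>i. d (p (g i)) x) \<longlonglongrightarrow> 0"

definition isometric_embedding ::
  "'b set \<Rightarrow> ('b \<Rightarrow> 'b \<Rightarrow> real) \<Rightarrow> 'a set \<Rightarrow> ('a \<Rightarrow> 'a \<Rightarrow> real) \<Rightarrow> ('b \<Rightarrow> 'a) \<Rightarrow> bool" where
  "isometric_embedding A dA M dM f \<longleftrightarrow>
     f ` A \<subseteq> M \<and> (\<forall>x\<in>A. \<forall>y\<in>A. dM (f x) (f y) = dA x y)"

definition computable_isometric_embedding ::
  "'b set \<Rightarrow> ('b \<Rightarrow> 'b \<Rightarrow> real) \<Rightarrow> (nat \<Rightarrow> 'b) \<Rightarrow>
   'a set \<Rightarrow> ('a \<Rightarrow> 'a \<Rightarrow> real) \<Rightarrow> (nat \<Rightarrow> 'a) \<Rightarrow> ('b \<Rightarrow> 'a) \<Rightarrow> bool" where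
  "computable_isometric_embedding A dA q M dM p f \<longleftrightarrow>
     isometric_embedding A dA M dM f \<and>
     (\<exists>h. computable2 h \<and> (\<forall>k. cauchy_name_for dM p (h k) (f (q k))))"

end

theory Submission
  imports Defs
begin


definition prog :: "recf \<Rightarrow> nat \<Rightarrow> (nat list \<Rightarrow> nat) \<Rightarrow> bool" where
  "prog c n f \<longleftrightarrow> (\<forall>xs. length xs = n \<longrightarrow> rec_eval c xs (f xs))"

definition rc :: "nat \<Rightarrow> (nat list \<Rightarrow> nat) \<Rightarrow> bool" where
  "rc n f \<longleftrightarrow> (\<exists>c. prog c n f)"

lemma len1: "length xs = 1 \<Longrightarrow> \<exists>a. xs = [a]"
  by (auto simp: length_Suc_conv)
lemma len2: "length xs = 2 \<Longrightarrow> \<exists>a b. xs = [a, b]"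
  by (auto simp: length_Suc_conv numeral_2_eq_2)
lemma len3: "length xs = 3 \<Longrightarrow> \<exists>a b c. xs = [a, b, c]"
  by (auto simp: length_Suc_conv numeral_3_eq_3)
lemma len4: "length xs = 4 \<Longrightarrow> \<exists>a b c d. xs = [a, b, c, d]"
  by (auto simp: length_Suc_conv eval_nat_numeral)

lemma rc_cong: "rc n f \<Longrightarrow> (\<And>xs. length xs = n \<Longrightarrow> f xs = g xs) \<Longrightarrow> rc n g"
  unfolding rc_def prog_def by metis

lemma rc_zero: "rc n (\<lambda>xs. 0)"
  unfolding rc_def prog_def by (blast intro: rec_eval.zero)

lemma rc_proj: "i < n \<Longrightarrow> rc n (\<lambda>xs. xs ! i)"
  unfolding rc_def prog_def by (blast intro: rec_eval.proj)

lemma rc_compl: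
  assumes f: "rc (length gs) f" and gs: "\<forall>g\<in>set gs. rc n g"
  shows "rc n (\<lambda>xs. f (map (\<lambda>g. g xs) gs))"
proof -
  obtain cf where cf: "prog cf (length gs) f" using f unfolding rc_def by blast
  have "\<forall>g\<in>set gs. \<exists>c. prog c n g" using gs unfolding rc_def by blast
  then have "\<exists>cs. list_all2 (\<lambda>c g. prog c n g) cs gs"
  proof (induction gs)
    case Nil then show ?case by auto
  next
    case (Cons g gs)
    then obtain c cs where "prog c n g" "list_all2 (\<lambda>c g. prog c n g) cs gs" by auto
    then show ?case by (intro exI[of _ "c # cs"]) auto
  qed
  then obtain cs where cs: "list_all2 (\<lambda>c g. prog c n g) cs gs" by blast
  have "prog (RComp cf cs) n (\<lambda>xs. f (map (\<lambda>g. g xs) gs))"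
    unfolding prog_def
  proof (intro allI impI)
    fix xs :: "nat list" assume len: "length xs = n"
    have "list_all2 (\<lambda>c y. rec_eval c xs y) cs (map (\<lambda>g. g xs) gs)"
      using cs len unfolding list_all2_conv_all_nth prog_def by auto
    moreover have "rec_eval cf (map (\<lambda>g. g xs) gs) (f (map (\<lambda>g. g xs) gs))"
      using cf unfolding prog_def by auto
    ultimately show "rec_eval (RComp cf cs) xs (f (map (\<lambda>g. g xs) gs))"
      by (rule rec_eval.comp)
  qed
  then show ?thesis unfolding rc_def by blast
qed

lemma rc_succ1: "rc 1 (\<lambda>xs. Suc (xs ! 0))"
proof -
  have "prog RS 1 (\<lambda>xs. Suc (xs ! 0))"
    unfolding prog_def
  proof (intro allI impI)
    fix xs :: "nat list" assume "length xs = 1"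
    then obtain x where "xs = [x]" by (cases xs) auto
    then show "rec_eval RS xs (Suc (xs ! 0))" by (auto intro: rec_eval.succ)
  qed
  then show ?thesis unfolding rc_def by blast
qed

lemma rc_c1: "rc 1 (\<lambda>ys. f (ys ! 0)) \<Longrightarrow> rc n g \<Longrightarrow> rc n (\<lambda>xs. f (g xs))"
  using rc_compl[of "[g]" "\<lambda>ys. f (ys ! 0)" n] by simp

lemma rc_c2: "rc 2 (\<lambda>ys. f (ys ! 0) (ys ! 1)) \<Longrightarrow> rc n g \<Longrightarrow> rc n h \<Longrightarrow> rc n (\<lambda>xs. f (g xs) (h xs))"
  using rc_compl[of "[g, h]" "\<lambda>ys. f (ys ! 0) (ys ! 1)" n] by (simp add: numeral_2_eq_2)

lemma rc_c3: "rc 3 (\<lambda>ys. f (ys ! 0) (ys ! 1) (ys ! 2)) \<Longrightarrow> rc n g \<Longrightarrow> rc n h \<Longrightarrow> rc n k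
   \<Longrightarrow> rc n (\<lambda>xs. f (g xs) (h xs) (k xs))"
  using rc_compl[of "[g, h, k]" "\<lambda>ys. f (ys ! 0) (ys ! 1) (ys ! 2)" n] by (simp add: numeral_3_eq_3)

lemma rc_c4: "rc 4 (\<lambda>ys. f (ys ! 0) (ys ! 1) (ys ! 2) (ys ! 3)) \<Longrightarrow> rc n g \<Longrightarrow> rc n h \<Longrightarrow> rc n k \<Longrightarrow> rc n l
   \<Longrightarrow> rc n (\<lambda>xs. f (g xs) (h xs) (k xs) (l xs))"
  using rc_compl[of "[g, h, k, l]" "\<lambda>ys. f (ys ! 0) (ys ! 1) (ys ! 2) (ys ! 3)" n]
  by (simp add: eval_nat_numeral)

lemma rc_Suc: "rc n g \<Longrightarrow> rc n (\<lambda>xs. Suc (g xs))"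
  by (rule rc_c1[OF rc_succ1])

lemma rc_const: "rc n (\<lambda>xs. k)"
  by (induction k) (auto intro: rc_zero rc_Suc)

lemma rc_prim_prog:
  assumes f: "prog cf n f" and g: "prog cg (Suc (Suc n)) g"
  shows "prog (RPrim cf cg) (Suc n) (\<lambda>xs. rec_nat (f (tl xs)) (\<lambda>k y. g (y # k # tl xs)) (hd xs))"
  unfolding prog_def
proof (intro allI impI)
  fix xs :: "nat list" assume "length xs = Suc n"
  then obtain x ys where xs: "xs = x # ys" and len: "length ys = n" by (cases xs) auto
  have "rec_eval (RPrim cf cg) (x # ys) (rec_nat (f ys) (\<lambda>k y. g (y # k # ys)) x)"
  proof (induction x)
    case 0
    have "rec_eval cf ys (f ys)" using f len unfolding prog_def by simp
    from rec_eval.prim0[OF this, of cg] show ?case by simp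
  next
    case (Suc x)
    have "rec_eval cg (rec_nat (f ys) (\<lambda>k y. g (y # k # ys)) x # x # ys) (g (rec_nat (f ys) (\<lambda>k y. g (y # k # ys)) x # x # ys))"
      using g len unfolding prog_def by simp
    from rec_eval.primS[OF Suc this] show ?case by simp
  qed
  then show "rec_eval (RPrim cf cg) xs (rec_nat (f (tl xs)) (\<lambda>k y. g (y # k # tl xs)) (hd xs))"
    unfolding xs list.sel .
qed

lemma rc_prim: "rc n f \<Longrightarrow> rc (Suc (Suc n)) g \<Longrightarrow>
   rc (Suc n) (\<lambda>xs. rec_nat (f (tl xs)) (\<lambda>k y. g (y # k # tl xs)) (hd xs))"
  unfolding rc_def using rc_prim_prog by blast

lemma rc_mn_prog:
  assumes f: "prog cf (Suc n) f" and ex: "\<forall>xs. length xs = n \<longrightarrow> (\<exists>k. f (k # xs) = 0)"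
  shows "prog (RMn cf) n (\<lambda>xs. LEAST k. f (k # xs) = 0)"
  unfolding prog_def
proof (intro allI impI)
  fix xs :: "nat list" assume len: "length xs = n"
  define m where "m = (LEAST k. f (k # xs) = 0)"
  obtain k0 where "f (k0 # xs) = 0" using ex len by blast
  then have m0: "f (m # xs) = 0" unfolding m_def by (rule LeastI)
  have lt: "\<forall>k<m. f (k # xs) \<noteq> 0" unfolding m_def using not_less_Least by blast
  show "rec_eval (RMn cf) xs (LEAST k. f (k # xs) = 0)"
    unfolding m_def[symmetric]
  proof (rule rec_eval.mn)
    have "length (m # xs) = Suc n" using len by simp
    then have "rec_eval cf (m # xs) (f (m # xs))" using f unfolding prog_def by blast
    then show "rec_eval cf (m # xs) 0" using m0 by simp
    show "\<forall>k<m. \<exists>y. rec_eval cf (k # xs) (Suc y)"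
    proof (intro allI impI)
      fix k assume "k < m"
      then have "f (k # xs) \<noteq> 0" using lt by blast
      then obtain y where "f (k # xs) = Suc y" using not0_implies_Suc by blast
      moreover have "length (k # xs) = Suc n" using len by simp
      then have "rec_eval cf (k # xs) (f (k # xs))" using f unfolding prog_def by blast
      ultimately show "\<exists>y. rec_eval cf (k # xs) (Suc y)" by auto
    qed
  qed
qed

lemma rc_mn: "rc (Suc n) f \<Longrightarrow> (\<And>xs. length xs = n \<Longrightarrow> \<exists>k. f (k # xs) = 0) \<Longrightarrow>
   rc n (\<lambda>xs. LEAST k. f (k # xs) = 0)"
  unfolding rc_def using rc_mn_prog by blast

lemma rc_iter1:
  assumes "rc 4 (\<lambda>ys. f (ys ! 0) (ys ! 3))"
  shows "rc 3 (\<lambda>ys. ((\<lambda>z. f z (ys ! 2)) ^^ (ys ! 0)) (ys ! 1))"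
proof -
  have R0: "rc (Suc 2) (\<lambda>xs. rec_nat ((\<lambda>ys. ys ! 0) (tl xs)) (\<lambda>k y. (\<lambda>ys. f (ys ! 0) (ys ! 3)) (y # k # tl xs)) (hd xs))"
  proof -
    have A: "rc (Suc (Suc 2)) (\<lambda>ys. f (ys ! 0) (ys ! 3))" using assms by (simp add: numeral_eq_Suc)
    show ?thesis by (rule rc_prim[OF rc_proj[of 0 2] A]) simp
  qed
  have e: "Suc 2 = 3" by simp
  have R: "rc 3 (\<lambda>xs. rec_nat ((\<lambda>ys. ys ! 0) (tl xs)) (\<lambda>k y. (\<lambda>ys. f (ys ! 0) (ys ! 3)) (y # k # tl xs)) (hd xs))"
    using R0 unfolding e .
  show ?thesis
  proof (rule rc_cong[OF R])
    fix xs :: "nat list" assume "length xs = 3"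
    then obtain x y a where xs: "xs = [x, y, a]" using len3 by blast
    show "rec_nat ((\<lambda>ys. ys ! 0) (tl xs)) (\<lambda>k y. (\<lambda>ys. f (ys ! 0) (ys ! 3)) (y # k # tl xs)) (hd xs) =
        ((\<lambda>z. f z (xs ! 2)) ^^ (xs ! 0)) (xs ! 1)"
      unfolding xs by (induction x) auto
  qed
qed

lemma rc_iter:
  assumes "rc 2 (\<lambda>ys. f (ys ! 0) (ys ! 1))" "rc n k" "rc n g" "rc n a"
  shows "rc n (\<lambda>xs. ((\<lambda>z. f z (a xs)) ^^ (k xs)) (g xs))"
proof -
  have "rc 4 (\<lambda>ys. f (ys ! 0) (ys ! 3))"
    using rc_c2[OF assms(1) rc_proj[of 0 4] rc_proj[of 3 4]] by simp
  from rc_c3[OF rc_iter1[OF this] assms(2,3,4)] show ?thesis .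
qed



lemma rc_projI: "i < n \<Longrightarrow> rc n (\<lambda>xs. xs ! i)" by (rule rc_proj)

lemma rc_pred1: "rc 1 (\<lambda>ys. ys ! 0 - 1)"
proof -
  have "rc (Suc 0) (\<lambda>xs. rec_nat ((\<lambda>_. 0) (tl xs)) (\<lambda>k y. (\<lambda>ys. ys ! 1) (y # k # tl xs)) (hd xs))"
    by (rule rc_prim[OF rc_const rc_proj]) simp
  then have "rc 1 (\<lambda>xs. rec_nat ((\<lambda>_. 0) (tl xs)) (\<lambda>k y. (\<lambda>ys. ys ! 1) (y # k # tl xs)) (hd xs))" by simp
  then show ?thesis
  proof (rule rc_cong)
    fix xs :: "nat list" assume "length xs = 1"
    then obtain a where xs: "xs = [a]" using len1 by blast
    show "rec_nat ((\<lambda>_. 0) (tl xs)) (\<lambda>k y. (\<lambda>ys. ys ! 1) (y # k # tl xs)) (hd xs) = xs ! 0 - 1"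
      unfolding xs by (cases a) auto
  qed
qed

lemma rc_pred: "rc n g \<Longrightarrow> rc n (\<lambda>xs. g xs - 1)"
  by (rule rc_c1[OF rc_pred1])

lemma funpow_Suc_add: "((\<lambda>z. Suc z) ^^ n) x = x + n" by (induction n) auto
lemma funpow_pred_sub: "((\<lambda>z. z - (1::nat)) ^^ n) x = x - n" by (induction n) auto
lemma funpow_add_mult: "((\<lambda>z. z + a) ^^ n) (0::nat) = a * n" by (induction n) auto

lemma rc_iter0:
  assumes "rc 1 (\<lambda>ys. f (ys ! 0))" "rc n k" "rc n g"
  shows "rc n (\<lambda>xs. ((\<lambda>z. f z) ^^ (k xs)) (g xs))"
proof -
  have "rc 2 (\<lambda>ys. (\<lambda>z a. f z) (ys ! 0) (ys ! 1))"
    using rc_c1[OF assms(1), of 2 "\<lambda>ys. ys ! 0"] rc_proj[of 0 2] by simp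
  from rc_iter[OF this assms(2,3) assms(3)] show ?thesis by simp
qed

lemma funpow_pred_sub': "((\<lambda>z. z - Suc 0) ^^ n) x = x - n" by (induction n) auto

lemma rc_plus: "rc n g \<Longrightarrow> rc n h \<Longrightarrow> rc n (\<lambda>xs. g xs + h xs)"
  by (rule rc_cong[OF rc_iter0[OF rc_succ1, of n h g]]) (simp_all add: funpow_Suc_add)

lemma rc_minus: "rc n g \<Longrightarrow> rc n h \<Longrightarrow> rc n (\<lambda>xs. g xs - h xs)"
  by (rule rc_cong[OF rc_iter0[OF rc_pred1, of n h g]]) (simp_all add: funpow_pred_sub funpow_pred_sub')

lemma rc_times: "rc n g \<Longrightarrow> rc n h \<Longrightarrow> rc n (\<lambda>xs. g xs * h xs)"
proof -
  assume g: "rc n g" and h: "rc n h"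
  have "rc 2 (\<lambda>ys. ys ! 0 + ys ! 1)" by (rule rc_plus; rule rc_proj; simp)
  from rc_iter[OF this h rc_const[of n 0] g] show ?thesis
    by (rule rc_cong) (simp add: funpow_add_mult)
qed

lemma rc_if0: "rc n c \<Longrightarrow> rc n a \<Longrightarrow> rc n b \<Longrightarrow> rc n (\<lambda>xs. if c xs = 0 then a xs else b xs)"
proof -
  assume c: "rc n c" and a: "rc n a" and b: "rc n b"
  have "rc n (\<lambda>xs. a xs * (1 - c xs) + b xs * (1 - (1 - c xs)))"
    by (intro rc_plus rc_times rc_minus a b c rc_const)
  then show ?thesis by (rule rc_cong) auto
qed

lemma rc_if_le: "rc n g \<Longrightarrow> rc n h \<Longrightarrow> rc n a \<Longrightarrow> rc n b \<Longrightarrow> rc n (\<lambda>xs. if g xs \<le> h xs then a xs else b xs)"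
  by (drule (1) rc_minus) (drule rc_if0, assumption+, simp)

lemma rc_if_eq: "rc n g \<Longrightarrow> rc n h \<Longrightarrow> rc n a \<Longrightarrow> rc n b \<Longrightarrow> rc n (\<lambda>xs. if g xs = h xs then a xs else b xs)"
proof -
  assume g: "rc n g" and h: "rc n h" and a: "rc n a" and b: "rc n b"
  have "rc n (\<lambda>xs. if (g xs - h xs) + (h xs - g xs) = 0 then a xs else b xs)"
    by (intro rc_if0 rc_plus rc_minus g h a b)
  then show ?thesis by (rule rc_cong) auto
qed

lemma rc_if_and_eq: "rc n g \<Longrightarrow> rc n h \<Longrightarrow> rc n g' \<Longrightarrow> rc n h' \<Longrightarrow> rc n a \<Longrightarrow> rc n b \<Longrightarrow>
  rc n (\<lambda>xs. if g xs = h xs \<and> g' xs = h' xs then a xs else b xs)"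
proof -
  assume g: "rc n g" and h: "rc n h" and g': "rc n g'" and h': "rc n h'" and a: "rc n a" and b: "rc n b"
  have "rc n (\<lambda>xs. if g xs = h xs then (if g' xs = h' xs then a xs else b xs) else b xs)"
    by (intro rc_if_eq g h g' h' a b)
  then show ?thesis by (rule rc_cong) auto
qed

lemmas rc_basic = rc_const rc_projI rc_Suc rc_pred rc_plus rc_minus rc_times rc_if_le rc_if_eq

lemma rc_tri1: "rc 1 (\<lambda>ys. triangle (ys ! 0))"
proof -
  have "rc (Suc 0) (\<lambda>xs. rec_nat ((\<lambda>_. 0) (tl xs)) (\<lambda>k y. (\<lambda>ys. ys ! 0 + Suc (ys ! 1)) (y # k # tl xs)) (hd xs))"
    by (rule rc_prim[OF rc_const]) (intro rc_basic; simp)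
  then have "rc 1 (\<lambda>xs. rec_nat ((\<lambda>_. 0) (tl xs)) (\<lambda>k y. (\<lambda>ys. ys ! 0 + Suc (ys ! 1)) (y # k # tl xs)) (hd xs))" by simp
  then show ?thesis
  proof (rule rc_cong)
    fix xs :: "nat list" assume "length xs = 1"
    then obtain a where xs: "xs = [a]" using len1 by blast
    show "rec_nat ((\<lambda>_. 0) (tl xs)) (\<lambda>k y. (\<lambda>ys. ys ! 0 + Suc (ys ! 1)) (y # k # tl xs)) (hd xs) = triangle (xs ! 0)"
      unfolding xs by (induction a) auto
  qed
qed

lemma rc_tri: "rc n g \<Longrightarrow> rc n (\<lambda>xs. triangle (g xs))"
  by (rule rc_c1[OF rc_tri1])

definition pr :: "nat \<Rightarrow> nat \<Rightarrow> nat" where "pr a b = prod_encode (a, b)"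
definition p1 :: "nat \<Rightarrow> nat" where "p1 z = fst (prod_decode z)"
definition p2 :: "nat \<Rightarrow> nat" where "p2 z = snd (prod_decode z)"

lemma p1_pr[simp]: "p1 (pr a b) = a" and p2_pr[simp]: "p2 (pr a b) = b"
  by (simp_all add: p1_def p2_def pr_def)

lemma rc_pr: "rc n g \<Longrightarrow> rc n h \<Longrightarrow> rc n (\<lambda>xs. pr (g xs) (h xs))"
proof -
  assume g: "rc n g" and h: "rc n h"
  have "rc n (\<lambda>xs. triangle (g xs + h xs) + g xs)" by (intro rc_plus rc_tri g h)
  then show ?thesis by (rule rc_cong) (simp add: pr_def prod_encode_def)
qed

definition kk :: "nat \<Rightarrow> nat" where "kk z = (LEAST k. z < triangle (Suc k))"

lemma triangle_ge: "n \<le> triangle n" by (induction n) auto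

lemma prod_decode_kk: "prod_decode z = (z - triangle (kk z), kk z - (z - triangle (kk z)))"
proof -
  define k where "k = kk z"
  have w: "z < triangle (Suc z)" using triangle_ge[of "Suc z"] by simp
  have lt: "z < triangle (Suc k)" unfolding k_def kk_def by (rule LeastI[of "\<lambda>k. z < triangle (Suc k)" z, OF w])
  have ge: "triangle k \<le> z"
  proof (cases k)
    case 0 then show ?thesis by simp
  next
    case (Suc j)
    have "j < k" using Suc by simp
    then have "\<not> z < triangle (Suc j)" unfolding k_def kk_def by (rule not_less_Least)
    then show ?thesis using Suc by simp
  qed
  define m where "m = z - triangle k"
  have mk: "m \<le> k" using lt ge unfolding m_def by simp
  have "prod_encode (m, k - m) = z" using mk ge unfolding prod_encode_def m_def by simp
  then have "prod_decode z = (m, k - m)" by (metis prod_encode_inverse)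
  then show ?thesis unfolding m_def k_def .
qed

lemma rc_kk1: "rc 1 (\<lambda>ys. kk (ys ! 0))"
proof -
  have "rc (Suc 1) (\<lambda>ys. if Suc (ys ! 1) \<le> triangle (Suc (ys ! 0)) then 0 else 1)"
    by (intro rc_basic rc_tri; simp)
  moreover have "\<And>xs::nat list. length xs = 1 \<Longrightarrow>
      \<exists>k. (\<lambda>ys. if Suc (ys ! 1) \<le> triangle (Suc (ys ! 0)) then 0 else 1) (k # xs) = (0::nat)"
  proof -
    fix xs :: "nat list"
    show "\<exists>k. (\<lambda>ys. if Suc (ys ! 1) \<le> triangle (Suc (ys ! 0)) then 0 else 1) (k # xs) = (0::nat)"
      using triangle_ge[of "xs ! 0"] by (intro exI[of _ "xs ! 0"]) simp
  qed
  ultimately show ?thesis using rc_mn[of 1 "\<lambda>ys. if Suc (ys ! 1) \<le> triangle (Suc (ys ! 0)) then 0 else 1"]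
    by (auto elim!: rc_cong simp: kk_def Suc_le_eq)
qed

lemma rc_p1: "rc n g \<Longrightarrow> rc n (\<lambda>xs. p1 (g xs))"
proof -
  assume g: "rc n g"
  have "rc n (\<lambda>xs. g xs - triangle (kk (g xs)))" by (intro rc_minus rc_tri rc_c1[OF rc_kk1] g)
  then show ?thesis by (rule rc_cong) (simp add: p1_def prod_decode_kk)
qed

lemma rc_p2: "rc n g \<Longrightarrow> rc n (\<lambda>xs. p2 (g xs))"
proof -
  assume g: "rc n g"
  have "rc n (\<lambda>xs. kk (g xs) - (g xs - triangle (kk (g xs))))" by (intro rc_minus rc_tri rc_c1[OF rc_kk1] g)
  then show ?thesis by (rule rc_cong) (simp add: p2_def prod_decode_kk)
qed

definition lcons :: "nat \<Rightarrow> nat \<Rightarrow> nat" where "lcons x l = Suc (pr x l)"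
definition lhd :: "nat \<Rightarrow> nat" where "lhd l = p1 (l - 1)"
definition ltl :: "nat \<Rightarrow> nat" where "ltl l = p2 (l - 1)"
definition lnth :: "nat \<Rightarrow> nat \<Rightarrow> nat" where "lnth i l = lhd ((ltl ^^ i) l)"

lemma enc_Cons: "list_encode (x # xs) = lcons x (list_encode xs)" by (simp add: lcons_def pr_def)
lemma lhd_lcons[simp]: "lhd (lcons x l) = x" and ltl_lcons[simp]: "ltl (lcons x l) = l"
  by (simp_all add: lhd_def ltl_def lcons_def)
lemma lcons_ne0[simp]: "lcons x l \<noteq> 0" by (simp add: lcons_def)
lemma lnth_enc: "i < length xs \<Longrightarrow> lnth i (list_encode xs) = xs ! i"
proof (induction xs arbitrary: i)
  case Nil then show ?case by simp
next
  case (Cons x xs)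
  then show ?case by (cases i) (auto simp: lnth_def enc_Cons funpow_Suc_right simp del: funpow.simps list_encode.simps)
qed

lemma rc_lcons: "rc n g \<Longrightarrow> rc n h \<Longrightarrow> rc n (\<lambda>xs. lcons (g xs) (h xs))"
  unfolding lcons_def by (intro rc_Suc rc_pr)
lemma rc_lhd: "rc n g \<Longrightarrow> rc n (\<lambda>xs. lhd (g xs))"
  unfolding lhd_def by (intro rc_p1 rc_pred)
lemma rc_ltl: "rc n g \<Longrightarrow> rc n (\<lambda>xs. ltl (g xs))"
  unfolding ltl_def by (intro rc_p2 rc_pred)
lemma rc_lnth: "rc n g \<Longrightarrow> rc n h \<Longrightarrow> rc n (\<lambda>xs. lnth (g xs) (h xs))"
proof -
  assume g: "rc n g" and h: "rc n h"
  have "rc 1 (\<lambda>ys. ltl (ys ! 0))" by (intro rc_ltl rc_projI) simp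
  from rc_iter0[OF this g h] show ?thesis unfolding lnth_def by (intro rc_lhd) simp
qed

lemmas rc_all = rc_basic rc_tri rc_pr rc_p1 rc_p2 rc_lcons rc_lhd rc_ltl rc_lnth



declare list_encode.simps(2)[simp del]
lemma lhd_enc[simp]: "lhd (list_encode (x # l)) = x" by (simp add: enc_Cons)
lemma ltl_enc[simp]: "ltl (list_encode (x # l)) = list_encode l" by (simp add: enc_Cons)
lemma enc_eq0[simp]: "list_encode l = 0 \<longleftrightarrow> l = []"
  by (cases l) (simp_all add: enc_Cons)
lemma enc_Cons'[simp]: "lcons x (list_encode l) = list_encode (x # l)" by (simp add: enc_Cons)

definition ev2 :: "nat \<Rightarrow> nat \<Rightarrow> nat \<Rightarrow> nat \<Rightarrow> nat" where
 "ev2 c xs rest vs =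
  (if p1 c = 0 then pr rest (lcons 0 vs)
   else if p1 c = 1 then pr rest (lcons (Suc (lhd xs)) vs)
   else if p1 c = 2 then pr rest (lcons (lnth (p2 c) xs) vs)
   else if p1 c = 3 then pr (lcons (pr 1 (pr (p1 (p2 c)) (pr (p2 (p2 c)) (pr xs 0)))) rest) vs
   else if p1 c = 4 then
     (if lhd xs = 0 then pr (lcons (pr 0 (pr (p1 (p2 c)) (ltl xs))) rest) vs
      else pr (lcons (pr 0 (pr c (lcons (lhd xs - 1) (ltl xs))))
                (lcons (pr 3 (pr (p2 (p2 c)) (lcons (lhd xs - 1) (ltl xs)))) rest)) vs)
   else pr (lcons (pr 4 (pr (p2 c) (pr 0 xs))) rest) vs)"

definition ca2 :: "nat \<Rightarrow> nat \<Rightarrow> nat \<Rightarrow> nat \<Rightarrow> nat \<Rightarrow> nat \<Rightarrow> nat" where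
 "ca2 f gsr xs acc rest vs =
   (if gsr = 0 then pr (lcons (pr 0 (pr f acc)) rest) vs
    else pr (lcons (pr 0 (pr (lhd gsr) xs)) (lcons (pr 2 (pr f (pr (ltl gsr) (pr xs acc)))) rest)) vs)"

definition cc2 :: "nat \<Rightarrow> nat \<Rightarrow> nat \<Rightarrow> nat \<Rightarrow> nat \<Rightarrow> nat \<Rightarrow> nat" where
 "cc2 f gsr xs acc rest vs = pr (lcons (pr 1 (pr f (pr gsr (pr xs (lcons (lhd vs) acc))))) rest) (ltl vs)"

definition ps2 :: "nat \<Rightarrow> nat \<Rightarrow> nat \<Rightarrow> nat \<Rightarrow> nat" where
 "ps2 g xs rest vs = pr (lcons (pr 0 (pr g (lcons (lhd vs) xs))) rest) (ltl vs)"

definition ml2 :: "nat \<Rightarrow> nat \<Rightarrow> nat \<Rightarrow> nat \<Rightarrow> nat \<Rightarrow> nat" where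
 "ml2 f k xs rest vs = pr (lcons (pr 0 (pr f (lcons k xs))) (lcons (pr 5 (pr f (pr k xs))) rest)) vs"

definition mc2 :: "nat \<Rightarrow> nat \<Rightarrow> nat \<Rightarrow> nat \<Rightarrow> nat \<Rightarrow> nat" where
 "mc2 f k xs rest vs = (if lhd vs = 0 then pr rest (lcons k (ltl vs))
    else pr (lcons (pr 4 (pr f (pr (Suc k) xs))) rest) (ltl vs))"

definition tstep :: "nat \<Rightarrow> nat \<Rightarrow> nat \<Rightarrow> nat" where
 "tstep t rest vs =
  (if p1 t = 0 then ev2 (p1 (p2 t)) (p2 (p2 t)) rest vs
   else if p1 t = 1 then ca2 (p1 (p2 t)) (p1 (p2 (p2 t))) (p1 (p2 (p2 (p2 t)))) (p2 (p2 (p2 (p2 t)))) rest vs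
   else if p1 t = 2 then cc2 (p1 (p2 t)) (p1 (p2 (p2 t))) (p1 (p2 (p2 (p2 t)))) (p2 (p2 (p2 (p2 t)))) rest vs
   else if p1 t = 3 then ps2 (p1 (p2 t)) (p2 (p2 t)) rest vs
   else if p1 t = 4 then ml2 (p1 (p2 t)) (p1 (p2 (p2 t))) (p2 (p2 (p2 t))) rest vs
   else mc2 (p1 (p2 t)) (p1 (p2 (p2 t))) (p2 (p2 (p2 t))) rest vs)"

definition step :: "nat \<Rightarrow> nat" where
 "step st = (if p1 st = 0 then st else tstep (lhd (p1 st)) (ltl (p1 st)) (p2 st))"

lemma rc_ev2: "rc n a \<Longrightarrow> rc n b \<Longrightarrow> rc n c \<Longrightarrow> rc n d \<Longrightarrow> rc n (\<lambda>xs. ev2 (a xs) (b xs) (c xs) (d xs))"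
  unfolding ev2_def by (intro rc_all)
lemma rc_ca2: "rc n a \<Longrightarrow> rc n b \<Longrightarrow> rc n c \<Longrightarrow> rc n d \<Longrightarrow> rc n e \<Longrightarrow> rc n f \<Longrightarrow> rc n (\<lambda>xs. ca2 (a xs) (b xs) (c xs) (d xs) (e xs) (f xs))"
  unfolding ca2_def by (intro rc_all)
lemma rc_cc2: "rc n a \<Longrightarrow> rc n b \<Longrightarrow> rc n c \<Longrightarrow> rc n d \<Longrightarrow> rc n e \<Longrightarrow> rc n f \<Longrightarrow> rc n (\<lambda>xs. cc2 (a xs) (b xs) (c xs) (d xs) (e xs) (f xs))"
  unfolding cc2_def by (intro rc_all)
lemma rc_ps2: "rc n a \<Longrightarrow> rc n b \<Longrightarrow> rc n c \<Longrightarrow> rc n d \<Longrightarrow> rc n (\<lambda>xs. ps2 (a xs) (b xs) (c xs) (d xs))"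
  unfolding ps2_def by (intro rc_all)
lemma rc_ml2: "rc n a \<Longrightarrow> rc n b \<Longrightarrow> rc n c \<Longrightarrow> rc n d \<Longrightarrow> rc n e \<Longrightarrow> rc n (\<lambda>xs. ml2 (a xs) (b xs) (c xs) (d xs) (e xs))"
  unfolding ml2_def by (intro rc_all)
lemma rc_mc2: "rc n a \<Longrightarrow> rc n b \<Longrightarrow> rc n c \<Longrightarrow> rc n d \<Longrightarrow> rc n e \<Longrightarrow> rc n (\<lambda>xs. mc2 (a xs) (b xs) (c xs) (d xs) (e xs))"
  unfolding mc2_def by (intro rc_all)
lemma rc_tstep: "rc n a \<Longrightarrow> rc n b \<Longrightarrow> rc n c \<Longrightarrow> rc n (\<lambda>xs. tstep (a xs) (b xs) (c xs))"
  unfolding tstep_def by (intro rc_all rc_ev2 rc_ca2 rc_cc2 rc_ps2 rc_ml2 rc_mc2)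
lemma rc_step: "rc n a \<Longrightarrow> rc n (\<lambda>xs. step (a xs))"
  unfolding step_def by (intro rc_all rc_tstep)



fun code :: "recf \<Rightarrow> nat" where
  "code RZ = pr 0 0"
| "code RS = pr 1 0"
| "code (RProj i) = pr 2 i"
| "code (RComp f gs) = pr 3 (pr (code f) (list_encode (map code (rev gs))))"
| "code (RPrim f g) = pr 4 (pr (code f) (code g))"
| "code (RMn f) = pr 5 (code f)"

definition Ev :: "nat \<Rightarrow> nat \<Rightarrow> nat" where "Ev c x = pr 0 (pr c x)"
definition CA :: "nat \<Rightarrow> nat \<Rightarrow> nat \<Rightarrow> nat \<Rightarrow> nat" where "CA f g x a = pr 1 (pr f (pr g (pr x a)))"
definition CC :: "nat \<Rightarrow> nat \<Rightarrow> nat \<Rightarrow> nat \<Rightarrow> nat" where "CC f g x a = pr 2 (pr f (pr g (pr x a)))"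
definition PS :: "nat \<Rightarrow> nat \<Rightarrow> nat" where "PS g x = pr 3 (pr g x)"
definition MLoop :: "nat \<Rightarrow> nat \<Rightarrow> nat \<Rightarrow> nat" where "MLoop f k x = pr 4 (pr f (pr k x))"
definition MChk :: "nat \<Rightarrow> nat \<Rightarrow> nat \<Rightarrow> nat" where "MChk f k x = pr 5 (pr f (pr k x))"
definition stt :: "nat list \<Rightarrow> nat list \<Rightarrow> nat" where "stt ts vs = pr (list_encode ts) (list_encode vs)"

definition reach :: "nat \<Rightarrow> nat \<Rightarrow> bool" where "reach s s' \<longleftrightarrow> (\<exists>n. (step ^^ n) s = s')"

lemma reach_refl: "reach s s" unfolding reach_def by (intro exI[of _ 0]) simp
lemma reach_trans: "reach s s' \<Longrightarrow> reach s' s'' \<Longrightarrow> reach s s''"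
  unfolding reach_def by (metis funpow_add comp_apply)
lemma reach_step: "step s = s' \<Longrightarrow> reach s' s'' \<Longrightarrow> reach s s''"
  unfolding reach_def by (metis funpow_Suc_right comp_apply)

lemma step_stt: "step (stt (t # ts) vs) = tstep t (list_encode ts) (list_encode vs)"
  by (simp add: step_def stt_def)
lemma step_nil: "step (stt [] vs) = stt [] vs"
  by (simp add: step_def stt_def)

lemma pr_enc: "pr (list_encode ts) (list_encode vs) = stt ts vs" by (simp add: stt_def)

lemmas sim_simps = step_stt tstep_def ev2_def ca2_def cc2_def ps2_def ml2_def mc2_def
  Ev_def CA_def CC_def PS_def MLoop_def MChk_def pr_enc

lemma s_zero: "step (stt (Ev (code RZ) (list_encode xs) # ts) vs) = stt ts (0 # vs)"
  by (simp add: sim_simps)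
lemma s_succ: "step (stt (Ev (code RS) (list_encode (x # xs)) # ts) vs) = stt ts (Suc x # vs)"
  by (simp add: sim_simps)
lemma s_proj: "i < length xs \<Longrightarrow> step (stt (Ev (code (RProj i)) (list_encode xs) # ts) vs) = stt ts (xs ! i # vs)"
  by (simp add: sim_simps lnth_enc)
lemma s_comp: "step (stt (Ev (code (RComp f gs)) (list_encode xs) # ts) vs) =
   stt (CA (code f) (list_encode (map code (rev gs))) (list_encode xs) (list_encode []) # ts) vs"
  by (simp add: sim_simps)
lemma s_ca0: "step (stt (CA f (list_encode []) x a # ts) vs) = stt (Ev f a # ts) vs"
  by (simp add: sim_simps)
lemma s_ca: "step (stt (CA f (list_encode (g # gs)) x a # ts) vs) =
   stt (Ev g x # CC f (list_encode gs) x a # ts) vs"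
  by (simp add: sim_simps)
lemma s_cc: "step (stt (CC f g x (list_encode acc) # ts) (v # vs)) = stt (CA f g x (list_encode (v # acc)) # ts) vs"
  by (simp add: sim_simps)
lemma s_prim0: "step (stt (Ev (code (RPrim f g)) (list_encode (0 # xs)) # ts) vs) =
   stt (Ev (code f) (list_encode xs) # ts) vs"
  by (simp add: sim_simps)
lemma s_primS: "step (stt (Ev (code (RPrim f g)) (list_encode (Suc n # xs)) # ts) vs) =
   stt (Ev (code (RPrim f g)) (list_encode (n # xs)) # PS (code g) (list_encode (n # xs)) # ts) vs"
  by (simp add: sim_simps)
lemma s_ps: "step (stt (PS g (list_encode xs) # ts) (y # vs)) = stt (Ev g (list_encode (y # xs)) # ts) vs"
  by (simp add: sim_simps)
lemma s_mn: "step (stt (Ev (code (RMn f)) (list_encode xs) # ts) vs) = stt (MLoop (code f) 0 (list_encode xs) # ts) vs"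
  by (simp add: sim_simps)
lemma s_ml: "step (stt (MLoop f k (list_encode xs) # ts) vs) =
   stt (Ev f (list_encode (k # xs)) # MChk f k (list_encode xs) # ts) vs"
  by (simp add: sim_simps)
lemma s_mc0: "step (stt (MChk f k x # ts) (0 # vs)) = stt ts (k # vs)"
  by (simp add: sim_simps)
lemma s_mcS: "step (stt (MChk f k x # ts) (Suc y # vs)) = stt (MLoop f (Suc k) x # ts) vs"
  by (simp add: sim_simps)



declare reach_trans[trans]

lemma comp_loop:
  assumes "list_all2 (\<lambda>g y. \<forall>ts vs. reach (stt (Ev (code g) x # ts) vs) (stt ts (y # vs))) gs ys"
  shows "reach (stt (CA f (list_encode (map code (rev gs))) x (list_encode acc) # ts) vs)
               (stt (CA f (list_encode []) x (list_encode (ys @ acc)) # ts) vs)"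
  using assms
proof (induction gs arbitrary: ys acc rule: rev_induct)
  case Nil then show ?case by (simp add: reach_refl)
next
  case (snoc g gs)
  from snoc.prems obtain ys0 y where ys: "ys = ys0 @ [y]"
    and a0: "list_all2 (\<lambda>g y. \<forall>ts vs. reach (stt (Ev (code g) x # ts) vs) (stt ts (y # vs))) gs ys0"
    and a1: "\<forall>ts vs. reach (stt (Ev (code g) x # ts) vs) (stt ts (y # vs))"
    by (auto simp: list_all2_append1 list_all2_Cons1)
  have "reach (stt (CA f (list_encode (map code (rev (gs @ [g])))) x (list_encode acc) # ts) vs)
              (stt (Ev (code g) x # CC f (list_encode (map code (rev gs))) x (list_encode acc) # ts) vs)"
    unfolding rev_append map_append by (simp add: reach_step[OF s_ca reach_refl])
  also have "reach \<dots> (stt (CC f (list_encode (map code (rev gs))) x (list_encode acc) # ts) (y # vs))"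
    using a1 by blast
  also have "reach \<dots> (stt (CA f (list_encode (map code (rev gs))) x (list_encode (y # acc)) # ts) vs)"
    by (rule reach_step[OF s_cc reach_refl])
  also have "reach \<dots> (stt (CA f (list_encode []) x (list_encode (ys0 @ y # acc)) # ts) vs)"
    using snoc.IH[OF a0] .
  finally show ?case using ys by simp
qed

lemma mn_loop:
  assumes "\<forall>m<n. \<exists>y. rec_eval f (m # xs) (Suc y) \<and>
     (\<forall>ts vs. reach (stt (Ev (code f) (list_encode (m # xs)) # ts) vs) (stt ts (Suc y # vs)))"
  shows "m \<le> n \<Longrightarrow> reach (stt (MLoop (code f) 0 (list_encode xs) # ts) vs) (stt (MLoop (code f) m (list_encode xs) # ts) vs)"
proof (induction m)
  case 0 show ?case by (rule reach_refl)
next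
  case (Suc m)
  then have mn: "m < n" by simp
  then obtain y where y: "\<forall>ts vs. reach (stt (Ev (code f) (list_encode (m # xs)) # ts) vs) (stt ts (Suc y # vs))"
    using assms by blast
  have "reach (stt (MLoop (code f) 0 (list_encode xs) # ts) vs) (stt (MLoop (code f) m (list_encode xs) # ts) vs)"
    using Suc mn by simp
  also have "reach \<dots> (stt (Ev (code f) (list_encode (m # xs)) # MChk (code f) m (list_encode xs) # ts) vs)"
    by (rule reach_step[OF s_ml reach_refl])
  also have "reach \<dots> (stt (MChk (code f) m (list_encode xs) # ts) (Suc y # vs))"
    using y by blast
  also have "reach \<dots> (stt (MLoop (code f) (Suc m) (list_encode xs) # ts) vs)"
    by (rule reach_step[OF s_mcS reach_refl])
  finally show ?case .
qed

lemma sim: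
  "rec_eval c xs y \<Longrightarrow> \<forall>ts vs. reach (stt (Ev (code c) (list_encode xs) # ts) vs) (stt ts (y # vs))"
proof (induction rule: rec_eval.induct)
  case (zero xs) then show ?case by (intro allI, rule reach_step[OF s_zero reach_refl])
next
  case (succ x xs) then show ?case by (intro allI, rule reach_step[OF s_succ reach_refl])
next
  case (proj i xs) then show ?case by (intro allI, rule reach_step[OF s_proj reach_refl])
next
  case (comp xs gs ys f z)
  show ?case
  proof (intro allI)
    fix ts vs
    have L: "list_all2 (\<lambda>g y. \<forall>ts vs. reach (stt (Ev (code g) (list_encode xs) # ts) vs) (stt ts (y # vs))) gs ys"
      using comp.IH(1) by (rule list_all2_mono) blast
    have "reach (stt (Ev (code (RComp f gs)) (list_encode xs) # ts) vs)
       (stt (CA (code f) (list_encode (map code (rev gs))) (list_encode xs) (list_encode []) # ts) vs)"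
      by (rule reach_step[OF s_comp reach_refl])
    also have "reach \<dots> (stt (CA (code f) (list_encode []) (list_encode xs) (list_encode (ys @ [])) # ts) vs)"
      by (rule comp_loop[OF L])
    also have "reach \<dots> (stt (Ev (code f) (list_encode ys) # ts) vs)"
      using reach_step[OF s_ca0 reach_refl] by simp
    also have "reach \<dots> (stt ts (z # vs))" using comp.IH(2) by blast
    finally show "reach (stt (Ev (code (RComp f gs)) (list_encode xs) # ts) vs) (stt ts (z # vs))" .
  qed
next
  case (prim0 f xs y g)
  show ?case using prim0.IH by (blast intro: reach_step[OF s_prim0])
next
  case (primS f g n xs y z)
  show ?case
  proof (intro allI)
    fix ts vs
    have "reach (stt (Ev (code (RPrim f g)) (list_encode (Suc n # xs)) # ts) vs)
       (stt (Ev (code (RPrim f g)) (list_encode (n # xs)) # PS (code g) (list_encode (n # xs)) # ts) vs)"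
      by (rule reach_step[OF s_primS reach_refl])
    also have "reach \<dots> (stt (PS (code g) (list_encode (n # xs)) # ts) (y # vs))"
      using primS.IH(1) by blast
    also have "reach \<dots> (stt (Ev (code g) (list_encode (y # n # xs)) # ts) vs)"
      by (rule reach_step[OF s_ps reach_refl])
    also have "reach \<dots> (stt ts (z # vs))" using primS.IH(2) by blast
    finally show "reach (stt (Ev (code (RPrim f g)) (list_encode (Suc n # xs)) # ts) vs) (stt ts (z # vs))" .
  qed
next
  case (mn f n xs)
  show ?case
  proof (intro allI)
    fix ts vs
    have "reach (stt (Ev (code (RMn f)) (list_encode xs) # ts) vs) (stt (MLoop (code f) 0 (list_encode xs) # ts) vs)"
      by (rule reach_step[OF s_mn reach_refl])
    also have "reach \<dots> (stt (MLoop (code f) n (list_encode xs) # ts) vs)"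
      by (rule mn_loop[OF mn.IH(2)]) simp
    also have "reach \<dots> (stt (Ev (code f) (list_encode (n # xs)) # MChk (code f) n (list_encode xs) # ts) vs)"
      by (rule reach_step[OF s_ml reach_refl])
    also have "reach \<dots> (stt (MChk (code f) n (list_encode xs) # ts) (0 # vs))"
      using mn.IH(1) by blast
    also have "reach \<dots> (stt ts (n # vs))"
      by (rule reach_step[OF s_mc0 reach_refl])
    finally show "reach (stt (Ev (code (RMn f)) (list_encode xs) # ts) vs) (stt ts (n # vs))" .
  qed
qed



definition init :: "nat \<Rightarrow> nat \<Rightarrow> nat" where
  "init e a = pr (lcons (pr 0 (pr e (lcons a (lcons 0 0)))) 0) 0"

lemma init_stt: "init e a = stt [Ev e (list_encode [a, 0])] []"
  by (simp add: init_def stt_def Ev_def list_encode.simps(1)[symmetric] del: list_encode.simps(1))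

definition runS :: "nat \<Rightarrow> nat \<Rightarrow> nat \<Rightarrow> nat" where
  "runS e a s = (step ^^ s) (init e a)"

definition run :: "nat \<Rightarrow> nat \<Rightarrow> nat \<Rightarrow> nat" where
  "run e a s = (if p1 (runS e a s) = 0 then Suc (lhd (p2 (runS e a s))) else 0)"

lemma rc_run: "rc n a \<Longrightarrow> rc n b \<Longrightarrow> rc n c \<Longrightarrow> rc n (\<lambda>xs. run (a xs) (b xs) (c xs))"
proof -
  assume a: "rc n a" and b: "rc n b" and c: "rc n c"
  have s1: "rc 1 (\<lambda>ys. step (ys ! 0))" by (intro rc_step rc_projI) simp
  have i: "rc n (\<lambda>xs. init (a xs) (b xs))" unfolding init_def by (intro rc_all a b)
  have r: "rc n (\<lambda>xs. runS (a xs) (b xs) (c xs))"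
    unfolding runS_def using rc_iter0[OF s1 c i] by simp
  show ?thesis unfolding run_def by (intro rc_all r)
qed

lemma step_halted: "p1 S = 0 \<Longrightarrow> step S = S" by (simp add: step_def)

lemma funpow_halted: "p1 S = 0 \<Longrightarrow> (step ^^ k) S = S"
  by (induction k) (simp_all add: step_halted)

lemma runS_halted: "p1 (runS e a s) = 0 \<Longrightarrow> s \<le> s' \<Longrightarrow> runS e a s' = runS e a s"
proof -
  assume h: "p1 (runS e a s) = 0" and le: "s \<le> s'"
  then obtain k where "s' = k + s" by (metis add.commute le_add_diff_inverse)
  then have "runS e a s' = (step ^^ k) (runS e a s)" unfolding runS_def by (simp add: funpow_add)
  then show ?thesis using funpow_halted[OF h] by simp
qed

lemma run_mono: "run e a s \<noteq> 0 \<Longrightarrow> s \<le> s' \<Longrightarrow> run e a s' = run e a s"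
proof -
  assume "run e a s \<noteq> 0" "s \<le> s'"
  then have h: "p1 (runS e a s) = 0" unfolding run_def by (auto split: if_splits)
  show ?thesis unfolding run_def runS_halted[OF h \<open>s \<le> s'\<close>] ..
qed

lemma run_correct: "rec_eval c [a, 0] y \<Longrightarrow> \<exists>n. \<forall>s\<ge>n. run (code c) a s = Suc y"
proof -
  assume "rec_eval c [a, 0] y"
  from sim[OF this] have "reach (init (code c) a) (stt [] [y])" by (simp add: init_stt)
  then obtain n where n: "runS (code c) a n = stt [] [y]" unfolding reach_def runS_def by blast
  then have r: "run (code c) a n = Suc y" unfolding run_def by (simp add: stt_def)
  show ?thesis using run_mono[of "code c" a n] r by (intro exI[of _ n]) auto
qed

lemma rc_div2: "rc n g \<Longrightarrow> rc n (\<lambda>xs. g xs div 2)"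
proof -
  assume g: "rc n g"
  have "rc (Suc 1) (\<lambda>ys. if Suc (ys ! 1) \<le> 2 * ys ! 0 + 2 then 0 else 1)"
    by (intro rc_all; simp)
  moreover have "\<And>xs::nat list. length xs = 1 \<Longrightarrow>
      \<exists>k. (\<lambda>ys. if Suc (ys ! 1) \<le> 2 * ys ! 0 + 2 then 0 else 1) (k # xs) = (0::nat)"
  proof -
    fix xs :: "nat list"
    show "\<exists>k. (\<lambda>ys. if Suc (ys ! 1) \<le> 2 * ys ! 0 + 2 then 0 else 1) (k # xs) = (0::nat)"
      by (intro exI[of _ "xs ! 0"]) simp
  qed
  ultimately have "rc 1 (\<lambda>xs. LEAST k. (if Suc (xs ! 0) \<le> 2 * k + 2 then 0 else 1) = (0::nat))"
    using rc_mn[of 1 "\<lambda>ys. if Suc (ys ! 1) \<le> 2 * ys ! 0 + 2 then 0 else 1"] by simp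
  then have "rc 1 (\<lambda>xs. xs ! 0 div 2)"
  proof (rule rc_cong)
    fix xs :: "nat list"
    show "(LEAST k. (if Suc (xs ! 0) \<le> 2 * k + 2 then 0 else 1) = (0::nat)) = xs ! 0 div 2"
    proof (rule Least_equality)
      show "(if Suc (xs ! 0) \<le> 2 * (xs ! 0 div 2) + 2 then 0 else 1) = (0::nat)" by simp
      fix y assume "(if Suc (xs ! 0) \<le> 2 * y + 2 then 0 else 1) = (0::nat)"
      then show "xs ! 0 div 2 \<le> y" by (simp split: if_splits)
    qed
  qed
  from rc_c1[OF this g] show ?thesis .
qed

lemma rc_mod2: "rc n g \<Longrightarrow> rc n (\<lambda>xs. g xs mod 2)"
proof -
  assume g: "rc n g"
  have "rc n (\<lambda>xs. g xs - 2 * (g xs div 2))" by (intro rc_all rc_div2 g)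
  then show ?thesis by (rule rc_cong) (simp add: minus_mult_div_eq_mod)
qed



definition mval :: "(nat \<Rightarrow> nat \<Rightarrow> nat \<Rightarrow> nat) \<Rightarrow> nat \<Rightarrow> nat \<Rightarrow> nat" where
  "mval FM e s = FM (run e (2*e) s - 1) (run e (2*e+1) s - 1) s"
definition NN :: "(nat \<Rightarrow> nat \<Rightarrow> nat \<Rightarrow> nat) \<Rightarrow> nat \<Rightarrow> nat \<Rightarrow> nat" where
  "NN FM e s = (if run e (2*e) s = 0 then 3 else if run e (2*e+1) s = 0 then 3 else
     (if p1 (mval FM e s) mod 2 = 0 then p1 (mval FM e s) div 2 else 0) + 3 * (p2 (mval FM e s) + 1))"
definition BB :: "(nat \<Rightarrow> nat \<Rightarrow> nat \<Rightarrow> nat) \<Rightarrow> nat \<Rightarrow> nat \<Rightarrow> nat" where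
  "BB FM e s = (if run e (2*e) s = 0 then 0 else if run e (2*e+1) s = 0 then 0 else p2 (mval FM e s))"
definition FA :: "(nat \<Rightarrow> nat \<Rightarrow> nat \<Rightarrow> nat) \<Rightarrow> nat \<Rightarrow> nat \<Rightarrow> nat \<Rightarrow> nat" where
  "FA FM i k s = (if i = k then 0 else
     if NN FM (i div 2) s * (BB FM (k div 2) s + 1) \<le> NN FM (k div 2) s * (BB FM (i div 2) s + 1)
     then pr (2 * NN FM (k div 2) s) (BB FM (k div 2) s)
     else pr (2 * NN FM (i div 2) s) (BB FM (i div 2) s))"

lemma computable3_rc: "computable3 f \<longleftrightarrow> rc 3 (\<lambda>ys. f (ys ! 0) (ys ! 1) (ys ! 2))"
proof
  assume "computable3 f"
  then obtain c where c: "\<forall>x y z. rec_eval c [x, y, z] (f x y z)" unfolding computable3_def by blast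
  have "prog c 3 (\<lambda>ys. f (ys ! 0) (ys ! 1) (ys ! 2))"
    unfolding prog_def
  proof (intro allI impI)
    fix xs :: "nat list" assume "length xs = 3"
    then obtain x y z where "xs = [x, y, z]" using len3 by blast
    then show "rec_eval c xs (f (xs ! 0) (xs ! 1) (xs ! 2))" using c by simp
  qed
  then show "rc 3 (\<lambda>ys. f (ys ! 0) (ys ! 1) (ys ! 2))" unfolding rc_def by blast
next
  assume "rc 3 (\<lambda>ys. f (ys ! 0) (ys ! 1) (ys ! 2))"
  then obtain c where c: "prog c 3 (\<lambda>ys. f (ys ! 0) (ys ! 1) (ys ! 2))" unfolding rc_def by blast
  have "\<forall>x y z. rec_eval c [x, y, z] (f x y z)"
  proof (intro allI)
    fix x y z
    show "rec_eval c [x, y, z] (f x y z)" using c unfolding prog_def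
      by (metis length_Cons list.size(3) numeral_3_eq_3 nth_Cons_0 nth_Cons_Suc One_nat_def numeral_2_eq_2)
  qed
  then show "computable3 f" unfolding computable3_def by blast
qed

lemma computable3_FA:
  assumes "computable3 FM" shows "computable3 (FA FM)"
proof -
  have F: "rc 3 (\<lambda>ys. FM (ys ! 0) (ys ! 1) (ys ! 2))" using assms computable3_rc by blast
  have FMr: "\<And>a b c. rc 3 a \<Longrightarrow> rc 3 b \<Longrightarrow> rc 3 c \<Longrightarrow> rc 3 (\<lambda>xs. FM (a xs) (b xs) (c xs))"
    by (rule rc_c3[OF F])
  have M: "\<And>a b. rc 3 a \<Longrightarrow> rc 3 b \<Longrightarrow> rc 3 (\<lambda>xs. mval FM (a xs) (b xs))"
    unfolding mval_def by (intro rc_all rc_run FMr)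
  have N: "\<And>a b. rc 3 a \<Longrightarrow> rc 3 b \<Longrightarrow> rc 3 (\<lambda>xs. NN FM (a xs) (b xs))"
    unfolding NN_def by (intro rc_all rc_run M rc_div2 rc_mod2)
  have B: "\<And>a b. rc 3 a \<Longrightarrow> rc 3 b \<Longrightarrow> rc 3 (\<lambda>xs. BB FM (a xs) (b xs))"
    unfolding BB_def by (intro rc_all rc_run M)
  have "rc 3 (\<lambda>ys. FA FM (ys ! 0) (ys ! 1) (ys ! 2))"
    unfolding FA_def by (intro rc_all N B rc_div2; simp)
  then show ?thesis using computable3_rc by blast
qed

definition wv :: "(nat \<Rightarrow> nat \<Rightarrow> nat \<Rightarrow> nat) \<Rightarrow> nat \<Rightarrow> nat \<Rightarrow> real" where
  "wv FM e s = real (NN FM e s) / real (Suc (BB FM e s))"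

lemma rat_pr: "rat_of_code (pr (2 * N) B) = real N / real (Suc B)"
  by (simp add: rat_of_code_def pr_def int_decode_def sum_decode_def)

lemma rat_0: "rat_of_code 0 = 0"
  by (simp add: rat_of_code_def prod_decode_def int_decode_def sum_decode_def prod_decode_aux.simps)

lemma frac_le: "(real a / real (Suc b) \<le> real c / real (Suc d)) \<longleftrightarrow> a * (d + 1) \<le> c * (b + 1)"
proof -
  have "(real a / real (Suc b) \<le> real c / real (Suc d)) \<longleftrightarrow> real a * real (Suc d) \<le> real c * real (Suc b)"
    by (simp add: field_simps)
  also have "\<dots> \<longleftrightarrow> a * (d + 1) \<le> c * (b + 1)"
    by (metis Suc_eq_plus1 of_nat_le_iff of_nat_mult)
  finally show ?thesis .
qed

lemma rat_FA: "rat_of_code (FA FM i k s) = (if i = k then 0 else max (wv FM (i div 2) s) (wv FM (k div 2) s))"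
proof (cases "i = k")
  case True then show ?thesis by (simp add: FA_def rat_0)
next
  case False
  have eq: "(NN FM (i div 2) s * (BB FM (k div 2) s + 1) \<le> NN FM (k div 2) s * (BB FM (i div 2) s + 1))
     \<longleftrightarrow> wv FM (i div 2) s \<le> wv FM (k div 2) s"
    unfolding wv_def frac_le ..
  show ?thesis
  proof (cases "wv FM (i div 2) s \<le> wv FM (k div 2) s")
    case True
    then show ?thesis using False eq unfolding FA_def by (simp add: rat_pr max_def) (simp add: wv_def)
  next
    case F2: False
    then show ?thesis using False eq unfolding FA_def by (simp add: rat_pr max_def) (simp add: wv_def)
  qed
qed

lemma rat_code_max0:
  "max 0 (rat_of_code m) = real (if p1 m mod 2 = 0 then p1 m div 2 else 0) / real (Suc (p2 m))"
proof -
  have pd: "prod_decode m = (p1 m, p2 m)" by (simp add: p1_def p2_def)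
  show ?thesis
  proof (cases "p1 m mod 2 = 0")
    case True
    then have "int_decode (p1 m) = int (p1 m div 2)" by (simp add: int_decode_def sum_decode_def even_iff_mod_2_eq_zero)
    then show ?thesis using True by (simp add: rat_of_code_def pd)
  next
    case False
    then have "int_decode (p1 m) < 0" by (simp add: int_decode_def sum_decode_def even_iff_mod_2_eq_zero)
    then have "rat_of_code m < 0" by (simp add: rat_of_code_def pd divide_neg_pos)
    then show ?thesis using False by simp
  qed
qed

lemma wv_eq: "wv FM e s = (if run e (2*e) s \<noteq> 0 \<and> run e (2*e+1) s \<noteq> 0
   then 3 + max 0 (rat_of_code (mval FM e s)) else 3)"
proof (cases "run e (2*e) s \<noteq> 0 \<and> run e (2*e+1) s \<noteq> 0")
  case True
  define m where "m = mval FM e s"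
  define a where "a = (if p1 m mod 2 = 0 then p1 m div 2 else 0)"
  have "wv FM e s = real (a + 3 * (p2 m + 1)) / real (Suc (p2 m))"
    using True by (simp add: wv_def NN_def BB_def m_def a_def)
  also have "\<dots> = 3 + real a / real (Suc (p2 m))" by (simp add: field_simps)
  finally show ?thesis using True rat_code_max0[of m] by (simp add: a_def m_def)
next
  case False
  then show ?thesis by (auto simp: wv_def NN_def BB_def)
qed



definition wl :: "(nat \<Rightarrow> nat \<Rightarrow> nat \<Rightarrow> nat) \<Rightarrow> nat \<Rightarrow> real" where
  "wl FM e = lim (wv FM e)"

definition dA :: "(nat \<Rightarrow> nat \<Rightarrow> nat \<Rightarrow> nat) \<Rightarrow> real \<Rightarrow> real \<Rightarrow> real" where
  "dA FM x y = (if x = y then 0 else max (wl FM (nat \<lfloor>x\<rfloor> div 2)) (wl FM (nat \<lfloor>y\<rfloor> div 2)))"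

lemma run_stable: "run e a s \<noteq> 0 \<Longrightarrow> run e a s' \<noteq> 0 \<Longrightarrow> run e a s = run e a s'"
  by (cases "s \<le> s'") (metis run_mono, metis nat_le_linear run_mono)

locale lce =
  fixes M :: "'a set" and d :: "'a \<Rightarrow> 'a \<Rightarrow> real" and p :: "nat \<Rightarrow> 'a" and FM :: "nat \<Rightarrow> nat \<Rightarrow> nat \<Rightarrow> nat"
  assumes ms: "Metric_space M d" and rp: "range p \<subseteq> M"
    and mon: "\<And>i k. mono (\<lambda>s. rat_of_code (FM i k s))"
    and cv: "\<And>i k. (\<lambda>s. rat_of_code (FM i k s)) \<longlonglongrightarrow> d (p i) (p k)"
begin

lemma rp_in: "p i \<in> M" using rp by auto

lemma dnn: "0 \<le> d x y" using Metric_space.nonneg[OF ms] .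

lemma wv_props: "\<exists>L. mono (wv FM e) \<and> (wv FM e \<longlonglongrightarrow> L) \<and> 3 \<le> L \<and>
  (\<forall>n x y. run e (2*e) n = Suc x \<longrightarrow> run e (2*e+1) n = Suc y \<longrightarrow> L = 3 + d (p x) (p y))"
proof (cases "\<exists>n. run e (2*e) n \<noteq> 0 \<and> run e (2*e+1) n \<noteq> 0")
  case True
  then obtain n0 where n0: "run e (2*e) n0 \<noteq> 0" "run e (2*e+1) n0 \<noteq> 0" by blast
  define x where "x = run e (2*e) n0 - 1"
  define y where "y = run e (2*e+1) n0 - 1"
  have rx: "run e (2*e) n0 = Suc x" and ry: "run e (2*e+1) n0 = Suc y" using n0 by (simp_all add: x_def y_def)
  define hl where "hl s \<longleftrightarrow> run e (2*e) s \<noteq> 0 \<and> run e (2*e+1) s \<noteq> 0" for s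
  have hlx: "hl s \<Longrightarrow> run e (2*e) s = Suc x \<and> run e (2*e+1) s = Suc y" for s
    using run_stable[of e "2*e" s n0] run_stable[of e "2*e+1" s n0] n0 rx ry unfolding hl_def by auto
  have wvs: "wv FM e s = (if hl s then 3 + max 0 (rat_of_code (FM x y s)) else 3)" for s
    using hlx[of s] unfolding wv_eq mval_def hl_def by auto
  have hlm: "hl s \<Longrightarrow> s \<le> s' \<Longrightarrow> hl s'" for s s' unfolding hl_def using run_mono by metis
  have ge3: "3 \<le> wv FM e s" for s unfolding wvs by auto
  have mono: "mono (wv FM e)"
  proof (rule monoI)
    fix s s' :: nat assume le: "s \<le> s'"
    show "wv FM e s \<le> wv FM e s'"
    proof (cases "hl s")
      case True
      then have "hl s'" using hlm le by blast
      moreover have "rat_of_code (FM x y s) \<le> rat_of_code (FM x y s')" using mon[of x y] le by (auto simp: mono_def)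
      ultimately show ?thesis using True unfolding wvs by auto
    next
      case False then show ?thesis using ge3[of s'] unfolding wvs by simp
    qed
  qed
  have lim1: "(\<lambda>s. 3 + max 0 (rat_of_code (FM x y s))) \<longlonglongrightarrow> 3 + max 0 (d (p x) (p y))"
    by (intro tendsto_intros cv)
  have ev: "eventually (\<lambda>s. 3 + max 0 (rat_of_code (FM x y s)) = wv FM e s) sequentially"
  proof (rule eventually_sequentiallyI[of n0])
    fix s assume "n0 \<le> s"
    then have "hl s" using hlm[of n0 s] n0 unfolding hl_def by blast
    then show "3 + max 0 (rat_of_code (FM x y s)) = wv FM e s" unfolding wvs by simp
  qed
  have m0: "max 0 (d (p x) (p y)) = d (p x) (p y)" using dnn[of "p x" "p y"] by simp
  have lim: "wv FM e \<longlonglongrightarrow> 3 + d (p x) (p y)"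
    using tendsto_cong[OF ev] lim1 unfolding m0 by simp
  show ?thesis
  proof (intro exI[of _ "3 + d (p x) (p y)"] conjI mono lim allI impI)
    show "3 \<le> 3 + d (p x) (p y)" using dnn by simp
    fix n x' y' assume "run e (2*e) n = Suc x'" "run e (2*e+1) n = Suc y'"
    with hlx[of n] have "x' = x" "y' = y" unfolding hl_def by auto
    then show "3 + d (p x) (p y) = 3 + d (p x') (p y')" by simp
  qed
next
  case False
  have wvs: "wv FM e s = 3" for s
  proof -
    have "\<not> (run e (2*e) s \<noteq> 0 \<and> run e (2*e+1) s \<noteq> 0)" using False by blast
    then show ?thesis unfolding wv_eq by auto
  qed
  have wf: "wv FM e = (\<lambda>_. 3)" using wvs by auto
  show ?thesis
  proof (intro exI[of _ 3] conjI allI impI)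
    show "mono (wv FM e)" unfolding wf by (simp add: mono_def)
    show "wv FM e \<longlonglongrightarrow> 3" unfolding wf by simp
    fix n x y assume "run e (2*e) n = Suc x" "run e (2*e+1) n = Suc y"
    then have "run e (2*e) n \<noteq> 0 \<and> run e (2*e+1) n \<noteq> 0" by simp
    then show "3 = 3 + d (p x) (p y)" using False by blast
  qed simp
qed

lemma wl_props: "mono (wv FM e)" "wv FM e \<longlonglongrightarrow> wl FM e" "3 \<le> wl FM e"
  "run e (2*e) n = Suc x \<Longrightarrow> run e (2*e+1) n = Suc y \<Longrightarrow> wl FM e = 3 + d (p x) (p y)"
proof -
  obtain L where L: "mono (wv FM e)" "wv FM e \<longlonglongrightarrow> L" "3 \<le> L"
    "\<forall>n x y. run e (2*e) n = Suc x \<longrightarrow> run e (2*e+1) n = Suc y \<longrightarrow> L = 3 + d (p x) (p y)"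
    using wv_props by blast
  have wl: "wl FM e = L" unfolding wl_def using L(2) by (rule limI)
  show "mono (wv FM e)" "wv FM e \<longlonglongrightarrow> wl FM e" "3 \<le> wl FM e" using L wl by auto
  show "run e (2*e) n = Suc x \<Longrightarrow> run e (2*e+1) n = Suc y \<Longrightarrow> wl FM e = 3 + d (p x) (p y)"
    using L(4) wl by blast
qed

abbreviation "AA \<equiv> range (of_nat :: nat \<Rightarrow> real)"
abbreviation "qq \<equiv> (of_nat :: nat \<Rightarrow> real)"

lemma wl_nn: "0 \<le> wl FM e" using wl_props(3)[of e] by linarith

lemma dA_ge: "x \<noteq> y \<Longrightarrow> 3 \<le> dA FM x y"
  unfolding dA_def using wl_props(3) by (simp add: le_max_iff_disj)

lemma dA_nn: "0 \<le> dA FM x y"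
  using dA_ge[of x y] by (cases "x = y") (auto simp: dA_def)

lemma A_metric: "Metric_space AA (dA FM)"
proof
  fix x y z :: real
  show "0 \<le> dA FM x y" by (rule dA_nn)
  show "dA FM x y = dA FM y x" by (auto simp: dA_def max.commute)
  show "dA FM x y = 0 \<longleftrightarrow> x = y" using dA_ge[of x y] by (auto simp: dA_def)
  show "dA FM x z \<le> dA FM x y + dA FM y z"
    unfolding dA_def max_def
    using wl_nn[of "nat \<lfloor>x\<rfloor> div 2"] wl_nn[of "nat \<lfloor>y\<rfloor> div 2"] wl_nn[of "nat \<lfloor>z\<rfloor> div 2"]
    by auto
qed

lemma A_ultra: "ultrametric AA (dA FM)"
  unfolding ultrametric_def
  using dA_nn wl_nn by (auto simp: dA_def max_def)

lemma A_complete: "Metric_space.mcomplete AA (dA FM)"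
  unfolding Metric_space.mcomplete_def[OF A_metric]
proof (intro allI impI)
  fix \<sigma> :: "nat \<Rightarrow> real"
  assume c: "Metric_space.MCauchy AA (dA FM) \<sigma>"
  then have r: "range \<sigma> \<subseteq> AA" and "\<exists>N. \<forall>n n'. N \<le> n \<longrightarrow> N \<le> n' \<longrightarrow> dA FM (\<sigma> n) (\<sigma> n') < 1"
    unfolding Metric_space.MCauchy_def[OF A_metric] by auto
  then obtain N where N: "\<And>n n'. N \<le> n \<Longrightarrow> N \<le> n' \<Longrightarrow> dA FM (\<sigma> n) (\<sigma> n') < 1" by blast
  have eq: "N \<le> n \<Longrightarrow> \<sigma> n = \<sigma> N" for n using N[of n N] dA_ge[of "\<sigma> n" "\<sigma> N"] by force
  have "limitin (Metric_space.mtopology AA (dA FM)) \<sigma> (\<sigma> N) sequentially"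
    unfolding Metric_space.limitin_metric[OF A_metric]
  proof (intro conjI allI impI)
    show "\<sigma> N \<in> AA" using r by blast
    fix \<epsilon> :: real assume "0 < \<epsilon>"
    show "\<forall>\<^sub>F n in sequentially. \<sigma> n \<in> AA \<and> dA FM (\<sigma> n) (\<sigma> N) < \<epsilon>"
    proof (rule eventually_sequentiallyI[of N])
      fix n assume "N \<le> n"
      then show "\<sigma> n \<in> AA \<and> dA FM (\<sigma> n) (\<sigma> N) < \<epsilon>" using eq[of n] r \<open>0 < \<epsilon>\<close> by (auto simp: dA_def)
    qed
  qed
  then show "\<exists>x. limitin (Metric_space.mtopology AA (dA FM)) \<sigma> x sequentially" by blast
qed

lemma A_dists: "left_ce_dists (dA FM) qq" if "computable3 FM"
  unfolding left_ce_dists_def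
proof (intro exI[of _ "FA FM"] conjI allI)
  show "computable3 (FA FM)" using computable3_FA that .
  fix i k
  show "mono (\<lambda>s. rat_of_code (FA FM i k s))"
    unfolding rat_FA mono_def
  proof (intro allI impI)
    fix s s' :: nat assume "s \<le> s'"
    then have "wv FM (i div 2) s \<le> wv FM (i div 2) s'" "wv FM (k div 2) s \<le> wv FM (k div 2) s'"
      using wl_props(1) by (auto simp: mono_def)
    then show "(if i = k then 0 else max (wv FM (i div 2) s) (wv FM (k div 2) s))
        \<le> (if i = k then 0 else max (wv FM (i div 2) s') (wv FM (k div 2) s'))"
      by (cases "i = k") (auto intro: order_trans[OF _ max.cobounded1] order_trans[OF _ max.cobounded2])
  qed
  show "(\<lambda>s. rat_of_code (FA FM i k s)) \<longlonglongrightarrow> dA FM (qq i) (qq k)"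
    unfolding rat_FA dA_def using wl_props(2) by (auto intro: tendsto_max)
qed

lemma A_lce: "computable3 FM \<Longrightarrow> left_ce_metric_space AA (dA FM) qq"
proof -
  assume F: "computable3 FM"
  have "Metric_space.mtopology AA (dA FM) closure_of AA = AA"
    using closure_of_topspace[of "Metric_space.mtopology AA (dA FM)"]
    unfolding Metric_space.topspace_mtopology[OF A_metric] .
  then show ?thesis unfolding left_ce_metric_space_def
    using A_metric A_complete A_dists[OF F] by auto
qed

lemma cauchy_bound:
  assumes "cauchy_name_for d p g z" "z \<in> M"
  shows "d (p (g 0)) z \<le> 1"
proof -
  have c1: "\<forall>i k. i \<le> k \<longrightarrow> d (p (g i)) (p (g k)) \<le> (1/2) ^ i" and lim: "(\<lambda>k. d (p (g k)) z) \<longlonglongrightarrow> 0"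
    using assms(1) unfolding cauchy_name_for_def cauchy_name_def by auto
  have cn: "d (p (g 0)) (p (g k)) \<le> 1" for k using c1[rule_format, of 0 k] by simp
  have le: "d (p (g 0)) z \<le> 1 + d (p (g k)) z" for k
    using rp_in[of "g 0"] rp_in[of "g k"] Metric_space.triangle[OF ms, of "p (g 0)" "p (g k)" z] rp assms(2) cn[of k] by auto
  have "(\<lambda>k. 1 + d (p (g k)) z) \<longlonglongrightarrow> 1 + 0" by (intro tendsto_intros lim)
  then show ?thesis using le by (intro tendsto_le[OF _ _ tendsto_const]) auto
qed

lemma no_embed: "\<not> (\<exists>f. computable_isometric_embedding AA (dA FM) qq M d p f)"
proof
  assume "\<exists>f. computable_isometric_embedding AA (dA FM) qq M d p f"
  then obtain f h where iso: "isometric_embedding AA (dA FM) M d f" and hc: "computable2 h"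
    and hn: "\<And>k. cauchy_name_for d p (h k) (f (qq k))"
    unfolding computable_isometric_embedding_def by blast
  obtain c where c: "\<And>x y. rec_eval c [x, y] (h x y)" using hc unfolding computable2_def by blast
  define e where "e = code c"
  obtain n1 where n1: "\<forall>s\<ge>n1. run e (2*e) s = Suc (h (2*e) 0)" using run_correct[OF c] e_def by blast
  obtain n2 where n2: "\<forall>s\<ge>n2. run e (2*e+1) s = Suc (h (2*e+1) 0)" using run_correct[OF c] e_def by blast
  define x where "x = h (2*e) 0"
  define y where "y = h (2*e+1) 0"
  have W: "wl FM e = 3 + d (p x) (p y)"
    using n1[rule_format, of "max n1 n2"] n2[rule_format, of "max n1 n2"] unfolding x_def y_def
    by (intro wl_props(4)) auto
  have fl: "\<And>k. nat \<lfloor>(of_nat k :: real)\<rfloor> = k" by simp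
  have dq: "dA FM (qq (2*e)) (qq (2*e+1)) = wl FM e"
    unfolding dA_def fl by simp
  have fA: "f (qq k) \<in> M" for k using iso unfolding isometric_embedding_def by auto
  have "d (f (qq (2*e))) (f (qq (2*e+1))) = dA FM (qq (2*e)) (qq (2*e+1))"
    using iso unfolding isometric_embedding_def by blast
  then have D: "d (f (qq (2*e))) (f (qq (2*e+1))) = wl FM e" using dq by simp
  have b1: "d (p x) (f (qq (2*e))) \<le> 1" using cauchy_bound[OF hn fA] unfolding x_def .
  have b2: "d (p y) (f (qq (2*e+1))) \<le> 1" using cauchy_bound[OF hn fA] unfolding y_def .
  have px: "p x \<in> M" "p y \<in> M" using rp by auto
  have "d (f (qq (2*e))) (f (qq (2*e+1))) \<le> d (f (qq (2*e))) (p x) + d (p x) (f (qq (2*e+1)))"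
    using Metric_space.triangle[OF ms] fA px by blast
  also have "d (p x) (f (qq (2*e+1))) \<le> d (p x) (p y) + d (p y) (f (qq (2*e+1)))"
    using Metric_space.triangle[OF ms] fA px by blast
  finally have "d (f (qq (2*e))) (f (qq (2*e+1))) \<le> d (f (qq (2*e))) (p x) + (d (p x) (p y) + d (p y) (f (qq (2*e+1))))"
    by simp
  moreover have "d (f (qq (2*e))) (p x) = d (p x) (f (qq (2*e)))" using Metric_space.commute[OF ms] .
  ultimately show False using D W b1 b2 by linarith
qed

end

lemma first_part:
  fixes M :: "'a set" and d :: "'a \<Rightarrow> 'a \<Rightarrow> real" and p :: "nat \<Rightarrow> 'a"
  assumes "left_ce_metric_space M d p"
  shows "\<exists>(A :: real set) dA q. left_ce_metric_space A dA q \<and> ultrametric A dA \<and>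
         \<not> (\<exists>f. computable_isometric_embedding A dA q M d p f)"
proof -
  from assms obtain FM where ms: "Metric_space M d" and rp: "range p \<subseteq> M" and FM: "computable3 FM"
    and mc: "\<forall>i k. mono (\<lambda>s. rat_of_code (FM i k s)) \<and> (\<lambda>s. rat_of_code (FM i k s)) \<longlonglongrightarrow> d (p i) (p k)"
    unfolding left_ce_metric_space_def left_ce_dists_def by blast
  have "lce M d p FM" unfolding lce_def using ms rp mc by auto
  then interpret L: lce M d p FM .
  show ?thesis using L.A_lce[OF FM] L.A_ultra L.no_embed by blast
qed

theorem mainTheorem15:
  fixes M :: "'a set" and d :: "'a \<Rightarrow> 'a \<Rightarrow> real" and p :: "nat \<Rightarrow> 'a"
  shows
   "(left_ce_metric_space M d p \<longrightarrow>
      (\<exists>(A :: real set) dA q. left_ce_metric_space A dA q \<and> ultrametric A dA \<and>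
         \<not> (\<exists>f. computable_isometric_embedding A dA q M d p f)))
    \<and>
    \<not> (\<exists>(U :: 'a set) dU pU. left_ce_metric_space U dU pU \<and>
         (\<forall>(A :: real set) dA q. left_ce_metric_space A dA q \<longrightarrow>
            (\<exists>f. computable_isometric_embedding A dA q U dU pU f)))"
proof (intro conjI impI notI)
  assume "left_ce_metric_space M d p"
  then show "\<exists>(A :: real set) dA q. left_ce_metric_space A dA q \<and> ultrametric A dA \<and>
         \<not> (\<exists>f. computable_isometric_embedding A dA q M d p f)" by (rule first_part)
next
  assume "\<exists>(U :: 'a set) dU pU. left_ce_metric_space U dU pU \<and>
         (\<forall>(A :: real set) dA q. left_ce_metric_space A dA q \<longrightarrow>
            (\<exists>f. computable_isometric_embedding A dA q U dU pU f))"
  then obtain U :: "'a set" and dU pU where U: "left_ce_metric_space U dU pU"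
    and all: "\<forall>(A :: real set) dA q. left_ce_metric_space A dA q \<longrightarrow>
            (\<exists>f. computable_isometric_embedding A dA q U dU pU f)" by blast
  from first_part[OF U] obtain A :: "real set" and dA q where "left_ce_metric_space A dA q"
    "\<not> (\<exists>f. computable_isometric_embedding A dA q U dU pU f)" by blast
  with all show False by blast
qed


end
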